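(* Let $Q$ be a Jordan loop and $x\in Q$ such that $x^3x^3=x^6$. Then (i) $x^6$ is well-defined; (ii) $x^7$ is well-defined; (iii) $x^6x^{-1}=x^5$; (iv) $x^8$ is well-defined.
   Context: A loop is a set $Q$ with a binary operation (juxtaposition) and neutral element $e$ such that for all $a,b$ the equations $ax=b$, $ya=b$ have unique solutions. A Jordan loop is a commutative loop satisfying $x^2(yx)=(x^2y)x$. For $k\ge 0$, $x^k$ denotes the right-associated product $x(x(\cdots(xe)\cdots))$ with $k$ factors $x$. We say $x^k$ is well-defined if every bracketing of a product of $k$ copies of $x$ gives the same value. $x^{-1}$ denotes the (two-sided) inverse of $x$. *)

theory Defs
  imports Main
begin

definition loop :: "('a \<Rightarrow> 'a \<Rightarrow> 'a) \<Rightarrow> 'a \<Rightarrow> bool" where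
  "loop mult e \<longleftrightarrow>
     (\<forall>a. mult e a = a \<and> mult a e = a) \<and>
     (\<forall>a b. \<exists>!x. mult a x = b) \<and>
     (\<forall>a b. \<exists>!y. mult y a = b)"

definition jordan_loop :: "('a \<Rightarrow> 'a \<Rightarrow> 'a) \<Rightarrow> 'a \<Rightarrow> bool" where
  "jordan_loop mult e \<longleftrightarrow> loop mult e \<and>
     (\<forall>a b. mult a b = mult b a) \<and>
     (\<forall>x y. mult (mult x x) (mult y x) = mult (mult (mult x x) y) x)"

fun rpow :: "('a \<Rightarrow> 'a \<Rightarrow> 'a) \<Rightarrow> 'a \<Rightarrow> 'a \<Rightarrow> nat \<Rightarrow> 'a" where
  "rpow mult e x 0 = e"
| "rpow mult e x (Suc k) = mult x (rpow mult e x k)"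

text \<open>bracketing mult x k v: v is the value of some bracketing of a product of k copies of x.\<close>
inductive bracketing :: "('a \<Rightarrow> 'a \<Rightarrow> 'a) \<Rightarrow> 'a \<Rightarrow> nat \<Rightarrow> 'a \<Rightarrow> bool"
  for mult :: "'a \<Rightarrow> 'a \<Rightarrow> 'a" and x :: 'a where
  single: "bracketing mult x 1 x"
| prod: "bracketing mult x i a \<Longrightarrow> bracketing mult x j b \<Longrightarrow> bracketing mult x (i + j) (mult a b)"

definition well_defined_pow :: "('a \<Rightarrow> 'a \<Rightarrow> 'a) \<Rightarrow> 'a \<Rightarrow> 'a \<Rightarrow> nat \<Rightarrow> bool" where
  "well_defined_pow mult e x k \<longleftrightarrow>
     (\<forall>v w. bracketing mult x k v \<longrightarrow> bracketing mult x k w \<longrightarrow> v = w)"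

definition loop_inv :: "('a \<Rightarrow> 'a \<Rightarrow> 'a) \<Rightarrow> 'a \<Rightarrow> 'a \<Rightarrow> 'a" where
  "loop_inv mult e x = (THE y. mult x y = e \<and> mult y x = e)"

end

theory Submission
  imports Defs
begin

locale jl =
  fixes mult :: "'a \<Rightarrow> 'a \<Rightarrow> 'a" (infixl "\<cdot>" 70) and e :: 'a
  assumes comm: "a \<cdot> b = b \<cdot> a"
    and unit: "e \<cdot> a = a"
    and canc: "a \<cdot> b = a \<cdot> c \<Longrightarrow> b = c"
    and jor: "(a \<cdot> a) \<cdot> (b \<cdot> a) = a \<cdot> ((a \<cdot> a) \<cdot> b)"
begin

lemma unit2: "a \<cdot> e = a" using comm unit by metis

lemma g1: assumes "a \<cdot> b = e" shows "(a \<cdot> a) \<cdot> b = a"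
proof -
  have "(a \<cdot> a) \<cdot> (b \<cdot> a) = a \<cdot> ((a \<cdot> a) \<cdot> b)" by (rule jor)
  hence "a \<cdot> a = a \<cdot> ((a \<cdot> a) \<cdot> b)" using assms comm unit2 by metis
  thus ?thesis using canc by metis
qed

lemma g2: assumes "a \<cdot> b = e" shows "(b \<cdot> b) \<cdot> (a \<cdot> a) = e"
proof -
  have ba: "b \<cdot> a = e" using assms comm by metis
  have "(b \<cdot> b) \<cdot> ((a \<cdot> a) \<cdot> b) = b \<cdot> ((b \<cdot> b) \<cdot> (a \<cdot> a))" by (rule jor)
  moreover have "(a \<cdot> a) \<cdot> b = a" using g1 assms .
  moreover have "(b \<cdot> b) \<cdot> a = b" using g1 ba .
  ultimately have "b \<cdot> e = b \<cdot> ((b \<cdot> b) \<cdot> (a \<cdot> a))" using unit2 by metis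
  thus ?thesis using canc by metis
qed

lemma g3a: assumes "a \<cdot> b = e"
  shows "((a \<cdot> a) \<cdot> (a \<cdot> a)) \<cdot> b = a \<cdot> (a \<cdot> a)"
proof -
  have 1: "((a \<cdot> a) \<cdot> (a \<cdot> a)) \<cdot> (b \<cdot> (a \<cdot> a)) = (a \<cdot> a) \<cdot> (((a \<cdot> a) \<cdot> (a \<cdot> a)) \<cdot> b)"
    by (rule jor)
  have 2: "b \<cdot> (a \<cdot> a) = a" using g1 assms comm by metis
  have 3: "(a \<cdot> a) \<cdot> ((a \<cdot> a) \<cdot> a) = a \<cdot> ((a \<cdot> a) \<cdot> (a \<cdot> a))" by (rule jor)
  have "(a \<cdot> a) \<cdot> (a \<cdot> (a \<cdot> a)) = (a \<cdot> a) \<cdot> (((a \<cdot> a) \<cdot> (a \<cdot> a)) \<cdot> b)"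
    using 1 2 3 comm by metis
  thus ?thesis using canc by metis
qed

lemma g4: assumes "a \<cdot> b = e" shows "(b \<cdot> b) \<cdot> (a \<cdot> (a \<cdot> a)) = a"
proof -
  have 1: "(b \<cdot> b) \<cdot> (((a \<cdot> a) \<cdot> (a \<cdot> a)) \<cdot> b) = b \<cdot> ((b \<cdot> b) \<cdot> ((a \<cdot> a) \<cdot> (a \<cdot> a)))"
    by (rule jor)
  have 2: "(a \<cdot> a) \<cdot> (b \<cdot> b) = e" using g2 assms comm by metis
  have 3: "((a \<cdot> a) \<cdot> (a \<cdot> a)) \<cdot> (b \<cdot> b) = a \<cdot> a" using g1 2 .
  have 4: "b \<cdot> (a \<cdot> a) = a" using g1 assms comm by metis
  show ?thesis using 1 3 4 g3a[OF assms] comm by metis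
qed

lemma g3: assumes "a \<cdot> b = e" shows "(a \<cdot> (a \<cdot> a)) \<cdot> b = a \<cdot> a"
proof -
  have 1: "(b \<cdot> b) \<cdot> ((a \<cdot> (a \<cdot> a)) \<cdot> b) = b \<cdot> ((b \<cdot> b) \<cdot> (a \<cdot> (a \<cdot> a)))" by (rule jor)
  have "b \<cdot> a = e" using assms comm by metis
  hence "(b \<cdot> b) \<cdot> ((a \<cdot> (a \<cdot> a)) \<cdot> b) = (b \<cdot> b) \<cdot> (a \<cdot> a)"
    using 1 g4[OF assms] g2[OF assms] by metis
  thus ?thesis using canc by metis
qed

lemma f2: "(x \<cdot> x) \<cdot> rpow (\<cdot>) e x k = rpow (\<cdot>) e x (k + 2)"
proof (induction k)
  case 0
  then show ?case by (simp add: unit2 eval_nat_numeral)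
next
  case (Suc k)
  have "(x \<cdot> x) \<cdot> (rpow (\<cdot>) e x k \<cdot> x) = x \<cdot> ((x \<cdot> x) \<cdot> rpow (\<cdot>) e x k)" by (rule jor)
  then show ?case using Suc comm by simp
qed

end

locale jlx = jl +
  fixes x u :: 'a
  assumes inv: "x \<cdot> u = e"
    and hyp: "rpow (\<cdot>) e x 3 \<cdot> rpow (\<cdot>) e x 3 = rpow (\<cdot>) e x 6"
begin

abbreviation P where "P n \<equiv> rpow (\<cdot>) e x n"

lemma P1: "P 1 = x" by (simp add: unit2)
lemma P2: "P 2 = x \<cdot> x" by (simp add: unit2 eval_nat_numeral)
lemma P3: "P 3 = x \<cdot> (x \<cdot> x)" by (simp add: unit2 eval_nat_numeral)
lemma PS: "x \<cdot> P n = P (Suc n)" by simp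

lemma t2: "P 2 \<cdot> P k = P (k + 2)" using f2 P2 by metis

lemma t34: "P 3 \<cdot> P 4 = P 7"
proof -
  have "(P 2 \<cdot> P 2) \<cdot> (x \<cdot> P 2) = P 2 \<cdot> ((P 2 \<cdot> P 2) \<cdot> x)" by (rule jor)
  moreover have "P 2 \<cdot> P 2 = P 4" using t2[of 2] by simp
  moreover have "x \<cdot> P 2 = P 3" using PS[of 2] by (simp add: eval_nat_numeral)
  moreover have "P 4 \<cdot> x = P 5" using PS[of 4] comm by (simp add: eval_nat_numeral)
  moreover have "P 2 \<cdot> P 5 = P 7" using t2[of 5] by simp
  ultimately show ?thesis using comm by metis
qed

lemma t44: "P 4 \<cdot> P 4 = P 8"
proof -
  have "(P 2 \<cdot> P 2) \<cdot> (P 2 \<cdot> P 2) = P 2 \<cdot> ((P 2 \<cdot> P 2) \<cdot> P 2)" by (rule jor)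
  moreover have "P 2 \<cdot> P 2 = P 4" using t2[of 2] by simp
  moreover have "P 2 \<cdot> P 4 = P 6" using t2[of 4] by simp
  moreover have "P 2 \<cdot> P 6 = P 8" using t2[of 6] by simp
  ultimately show ?thesis using comm by metis
qed

definition v where "v = (u \<cdot> u) \<cdot> (u \<cdot> u)"

lemma uinv: "u \<cdot> x = e" using inv comm by metis

lemma B: "v \<cdot> P 6 = P 2"
proof -
  have "(u \<cdot> u) \<cdot> (x \<cdot> x) = e" using g2[OF inv] .
  hence "P 2 \<cdot> (u \<cdot> u) = e" using P2 comm by metis
  hence "((u \<cdot> u) \<cdot> (u \<cdot> u)) \<cdot> (P 2 \<cdot> (P 2 \<cdot> P 2)) = P 2" using g4 by metis
  moreover have "P 2 \<cdot> P 2 = P 4" using t2[of 2] by simp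
  moreover have "P 2 \<cdot> P 4 = P 6" using t2[of 4] by simp
  ultimately show ?thesis unfolding v_def by metis
qed

lemma C: "v \<cdot> x = u \<cdot> (u \<cdot> u)"
proof -
  have 1: "(x \<cdot> x) \<cdot> (v \<cdot> x) = x \<cdot> ((x \<cdot> x) \<cdot> v)" by (rule jor)
  have "(u \<cdot> u) \<cdot> (x \<cdot> x) = e" using g2[OF inv] .
  hence 2: "v \<cdot> (x \<cdot> x) = u \<cdot> u" unfolding v_def using g1 by metis
  have 3: "(u \<cdot> u) \<cdot> x = u" using g1[OF uinv] .
  have 4: "(x \<cdot> x) \<cdot> (u \<cdot> (u \<cdot> u)) = u" using g4[OF uinv] .
  have "(x \<cdot> x) \<cdot> (v \<cdot> x) = (x \<cdot> x) \<cdot> (u \<cdot> (u \<cdot> u))" using 1 2 3 4 comm by metis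
  thus ?thesis using canc by metis
qed

lemma A: "v \<cdot> P 3 = u"
proof -
  have 1: "((u \<cdot> u) \<cdot> (u \<cdot> u)) \<cdot> (P 3 \<cdot> (u \<cdot> u)) = (u \<cdot> u) \<cdot> (((u \<cdot> u) \<cdot> (u \<cdot> u)) \<cdot> P 3)"
    by (rule jor)
  have 2: "P 3 \<cdot> (u \<cdot> u) = x" using g4[OF inv] P3 comm by metis
  have "(u \<cdot> u) \<cdot> u = (u \<cdot> u) \<cdot> (v \<cdot> P 3)" using 1 2 C comm unfolding v_def by metis
  thus ?thesis using canc by metis
qed

lemma iii: "P 6 \<cdot> u = P 5"
proof -
  have 1: "(P 3 \<cdot> P 3) \<cdot> (v \<cdot> P 3) = P 3 \<cdot> ((P 3 \<cdot> P 3) \<cdot> v)" by (rule jor)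
  have 2: "P 3 \<cdot> P 2 = P 5" using t2[of 3] comm by simp
  show ?thesis using 1 2 hyp A B comm by metis
qed

lemma t35: "P 3 \<cdot> P 5 = P 8"
proof -
  have 1: "(P 3 \<cdot> P 3) \<cdot> (u \<cdot> P 3) = P 3 \<cdot> ((P 3 \<cdot> P 3) \<cdot> u)" by (rule jor)
  have 2: "u \<cdot> P 3 = P 2" using g3[OF inv] P2 P3 comm by metis
  have 3: "P 6 \<cdot> P 2 = P 8" using t2[of 6] comm by simp
  show ?thesis using 1 2 3 hyp iii by metis
qed

lemma tab0: "1 \<le> i \<Longrightarrow> i \<le> j \<Longrightarrow> i + j \<le> 8 \<Longrightarrow> P i \<cdot> P j = P (i + j)"
proof -
  assume a: "1 \<le> i" "i \<le> j" "i + j \<le> 8"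
  hence "i = 1 \<or> i = 2 \<or> (i = 3 \<and> j = 3) \<or> (i = 3 \<and> j = 4) \<or> (i = 3 \<and> j = 5) \<or> (i = 4 \<and> j = 4)"
    by arith
  thus ?thesis
  proof (elim disjE conjE)
    assume "i = 1" thus ?thesis using P1 by simp
  next
    assume "i = 2" thus ?thesis using t2 by (simp add: add.commute)
  next
    assume "i = 3" "j = 3" thus ?thesis using hyp by simp
  next
    assume "i = 3" "j = 4" thus ?thesis using t34 by simp
  next
    assume "i = 3" "j = 5" thus ?thesis using t35 by simp
  next
    assume "i = 4" "j = 4" thus ?thesis using t44 by simp
  qed
qed

lemma tab: "1 \<le> i \<Longrightarrow> 1 \<le> j \<Longrightarrow> i + j \<le> 8 \<Longrightarrow> P i \<cdot> P j = P (i + j)"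
proof (cases "i \<le> j")
  case True
  assume "1 \<le> i" "1 \<le> j" "i + j \<le> 8" thus ?thesis using tab0 True by blast
next
  case False
  assume "1 \<le> i" "1 \<le> j" "i + j \<le> 8"
  hence "P j \<cdot> P i = P (j + i)" using tab0 False by simp
  thus ?thesis using comm by (metis add.commute)
qed

lemma br_pos: "bracketing (\<cdot>) y n w \<Longrightarrow> 1 \<le> n"
  by (induction rule: bracketing.induct) auto

lemma br: "bracketing (\<cdot>) x n w \<Longrightarrow> n \<le> 8 \<Longrightarrow> w = P n"
proof (induction rule: bracketing.induct)
  case single
  then show ?case using P1 by simp
next
  case (prod i a j b)
  have "1 \<le> i" "1 \<le> j" using prod br_pos by auto
  then show ?case using prod tab by auto
qed

lemma wd: "n \<le> 8 \<Longrightarrow> well_defined_pow (\<cdot>) e x n"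
  unfolding well_defined_pow_def using br by blast

lemma invx: "loop_inv (\<cdot>) e x = u"
  unfolding loop_inv_def
proof (rule the_equality)
  show "x \<cdot> u = e \<and> u \<cdot> x = e" using inv uinv by simp
next
  fix y assume "x \<cdot> y = e \<and> y \<cdot> x = e"
  thus "y = u" using inv canc by metis
qed

end

theorem theorem2p8:
  fixes mult :: "'a \<Rightarrow> 'a \<Rightarrow> 'a" and e x :: 'a
  assumes "jordan_loop mult e"
    and "mult (rpow mult e x 3) (rpow mult e x 3) = rpow mult e x 6"
  shows "well_defined_pow mult e x 6 \<and>
         well_defined_pow mult e x 7 \<and>
         mult (rpow mult e x 6) (loop_inv mult e x) = rpow mult e x 5 \<and>
         well_defined_pow mult e x 8"
proof -
  have L: "loop mult e" and C: "\<And>a b. mult a b = mult b a"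
    and J: "\<And>x y. mult (mult x x) (mult y x) = mult (mult (mult x x) y) x"
    using assms(1) unfolding jordan_loop_def by auto
  have U: "\<And>a. mult e a = a" using L unfolding loop_def by auto
  have E1: "\<And>a b. \<exists>!y. mult a y = b" using L unfolding loop_def by auto
  have K: "\<And>a b c. mult a b = mult a c \<Longrightarrow> b = c" using E1 by metis
  have J2: "\<And>a b. mult (mult a a) (mult b a) = mult a (mult (mult a a) b)"
    using J C by metis
  interpret jl mult e using C U K J2 by unfold_locales auto
  obtain u where u: "mult x u = e" using E1 by metis
  interpret jlx mult e x u using u assms(2) by unfold_locales auto
  show ?thesis using wd iii invx by simp
qed

end
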